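(* Let $k\in\{1,2,3\}$. A rule of a $3$-state $3$-neighbor vector-valued fuzzy cellular automaton ($3$-VFCA) is $k$-number-conserving if and only if the corresponding $3$-state $3$-neighbor vector-valued cellular automaton ($3$-VCA) is $k$-number-conserving.
   Context: Let $\bm{e}_1,\bm{e}_2,\bm{e}_3$ be the standard basis of $\mathbb{R}^3$ and $\Delta=\{(x_1,x_2,x_3)^{\top}\mid x_1+x_2+x_3=1,\ x_i\ge 0\}$. A $3$-VCA is given by a local rule $h:\{\bm{e}_1,\bm{e}_2,\bm{e}_3\}^3\to\{\bm{e}_1,\bm{e}_2,\bm{e}_3\}$; its cells $i\in\mathbb{Z}$ have states $\bm{x}_i^t\in\{\bm{e}_1,\bm{e}_2,\bm{e}_3\}$ evolving by $\bm{x}_i^{t+1}=h(\bm{x}_{i-1}^t,\bm{x}_i^t,\bm{x}_{i+1}^t)$. The corresponding $3$-VFCA has state set $\Delta$ and local rule $f:\Delta^3\to\Delta$, $f(\bm{x},\bm{y},\bm{z})=\sum_{j,k,\ell=1}^3 x_jy_kz_\ell\,h(\bm{e}_j,\bm{e}_k,\bm{e}_\ell)$, with the same update $\bm{x}_i^{t+1}=f(\bm{x}_{i-1}^t,\bm{x}_i^t,\bm{x}_{i+1}^t)$. Consider periodic configurations with positive integer period $L$, i.e. $\bm{x}_i^t=\bm{x}_{i+L}^t$. Writing $[\bm{x}]_k$ for the $k$th entry, set $\nu^t(k)=\sum_{i=1}^L[\bm{x}_i^t]_k$. The rule is $k$-number-conserving if $\nu^{t+1}(k)=\nu^t(k)$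 for all $t\in\mathbb{Z}_{\ge0}$ and every periodic initial configuration (of every period $L$), with states in $\{\bm{e}_1,\bm{e}_2,\bm{e}_3\}$ for the $3$-VCA and in $\Delta$ for the $3$-VFCA. *)

theory Defs
  imports "HOL-Analysis.Analysis"
begin

text \<open>States live in real^3, indexed by the numeral type 3 (indices 1,2,3).\<close>

definition e3 :: "3 \<Rightarrow> real^3" where
  "e3 j = axis j 1"

definition E3 :: "(real^3) set" where
  "E3 = range e3"

definition Delta :: "(real^3) set" where
  "Delta = {x. (\<forall>i. 0 \<le> x $ i) \<and> (\<Sum>i\<in>UNIV. x $ i) = 1}"

text \<open>A 3-VCA local rule: maps {e1,e2,e3}^3 into {e1,e2,e3}
  (its values outside E3 are irrelevant).\<close>
definition is_VCA_rule :: "(real^3 \<Rightarrow> real^3 \<Rightarrow> real^3 \<Rightarrow> real^3) \<Rightarrow> bool" where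
  "is_VCA_rule h \<longleftrightarrow> (\<forall>a\<in>E3. \<forall>b\<in>E3. \<forall>c\<in>E3. h a b c \<in> E3)"

definition fuzzify :: "(real^3 \<Rightarrow> real^3 \<Rightarrow> real^3 \<Rightarrow> real^3) \<Rightarrow> real^3 \<Rightarrow> real^3 \<Rightarrow> real^3 \<Rightarrow> real^3" where
  "fuzzify h x y z =
     (\<Sum>j\<in>UNIV. \<Sum>k\<in>UNIV. \<Sum>l\<in>UNIV. (x $ j * y $ k * z $ l) *\<^sub>R h (e3 j) (e3 k) (e3 l))"

definition ca_step :: "(real^3 \<Rightarrow> real^3 \<Rightarrow> real^3 \<Rightarrow> real^3) \<Rightarrow> (int \<Rightarrow> real^3) \<Rightarrow> (int \<Rightarrow> real^3)" where
  "ca_step rule c = (\<lambda>i. rule (c (i - 1)) (c i) (c (i + 1)))"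

definition nu :: "(real^3 \<Rightarrow> real^3 \<Rightarrow> real^3 \<Rightarrow> real^3) \<Rightarrow> (int \<Rightarrow> real^3) \<Rightarrow> int \<Rightarrow> nat \<Rightarrow> 3 \<Rightarrow> real" where
  "nu rule c L t k = (\<Sum>i\<in>{1..L}. ((ca_step rule ^^ t) c i) $ k)"

definition number_conserving :: "(real^3 \<Rightarrow> real^3 \<Rightarrow> real^3 \<Rightarrow> real^3) \<Rightarrow> (real^3) set \<Rightarrow> 3 \<Rightarrow> bool" where
  "number_conserving rule S k \<longleftrightarrow>
     (\<forall>L::int. L > 0 \<longrightarrow> (\<forall>c. (\<forall>i. c i \<in> S) \<and> (\<forall>i. c (i + L) = c i) \<longrightarrow>
        (\<forall>t. nu rule c L (Suc t) k = nu rule c L t k)))"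

end

theory Submission
  imports Defs
begin

lemma e3_nth: "e3 j $ i = (if i = j then 1 else 0)"
  by (simp add: e3_def axis_def)

lemma sum_e3: "(\<Sum>i\<in>UNIV. e3 j $ i) = 1"
  by (simp add: e3_nth)

lemma fuzzify_nth: "fuzzify h x y z $ m =
  (\<Sum>j\<in>UNIV. \<Sum>k\<in>UNIV. \<Sum>l\<in>UNIV. x $ j * y $ k * z $ l * h (e3 j) (e3 k) (e3 l) $ m)"
  by (simp add: fuzzify_def sum_component)

lemma sum_delta_l: "(\<Sum>j\<in>(UNIV::3 set). (if j = a then 1 else 0) * (f j::real)) = f a"
  by (rule trans[OF sum.cong[OF refl, of _ _ "\<lambda>j. if j = a then f j else 0"]]) auto

lemma fuzzify_E3: "fuzzify h (e3 a) (e3 b) (e3 c) = h (e3 a) (e3 b) (e3 c)"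
proof -
  have "fuzzify h (e3 a) (e3 b) (e3 c) $ i = h (e3 a) (e3 b) (e3 c) $ i" for i
    unfolding fuzzify_nth e3_nth
    by (simp only: mult.assoc sum_delta_l sum_distrib_left[symmetric])
  then show ?thesis by (simp add: vec_eq_iff)
qed

lemma sum_comp_swap: "(\<Sum>i\<in>UNIV. (sum f A) $ i) = (\<Sum>a\<in>A. \<Sum>i\<in>UNIV. f a $ i)"
  by (simp add: sum_component) (rule sum.swap)

lemma fuzzify_sum1:
  assumes h: "is_VCA_rule h" and x: "(\<Sum>i\<in>UNIV. x $ i) = 1" and y: "(\<Sum>i\<in>UNIV. y $ i) = 1"
    and z: "(\<Sum>i\<in>UNIV. z $ i) = 1"
  shows "(\<Sum>i\<in>UNIV. fuzzify h x y z $ i) = 1"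
proof -
  have s: "(\<Sum>i\<in>UNIV. h (e3 j) (e3 k) (e3 l) $ i) = 1" for j k l
  proof -
    have "h (e3 j) (e3 k) (e3 l) \<in> E3" using h by (simp add: is_VCA_rule_def E3_def)
    then show ?thesis using sum_e3 by (auto simp: E3_def)
  qed
  have "(\<Sum>i\<in>UNIV. fuzzify h x y z $ i) = 
    (\<Sum>j\<in>UNIV. \<Sum>k\<in>UNIV. \<Sum>l\<in>UNIV. x $ j * y $ k * z $ l * (\<Sum>i\<in>UNIV. h (e3 j) (e3 k) (e3 l) $ i))"
    unfolding fuzzify_def sum_comp_swap by (simp add: sum_distrib_left)
  also have "\<dots> = (\<Sum>j\<in>UNIV. x $ j * (\<Sum>k\<in>UNIV. y $ k * (\<Sum>l\<in>UNIV. z $ l)))"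
    by (simp add: s sum_distrib_left mult.assoc)
  finally show ?thesis using x y z by simp
qed

lemma iter_props:
  assumes clo: "\<forall>a\<in>S. \<forall>b\<in>S. \<forall>c\<in>S. r a b c \<in> S"
    and "\<forall>i. c i \<in> S" and "\<forall>i. c (i + L) = c i"
  shows "(\<forall>i. (ca_step r ^^ t) c i \<in> S) \<and> (\<forall>i. (ca_step r ^^ t) c (i + L) = (ca_step r ^^ t) c i)"
proof (induction t)
  case 0
  then show ?case using assms by simp
next
  case (Suc t)
  define d where "d = (ca_step r ^^ t) c"
  have dS: "\<forall>i. d i \<in> S" and dp: "\<forall>i. d (i + L) = d i" using Suc d_def by auto
  have "d (i + L - 1) = d (i - 1)" for i using dp[rule_format, of "i - 1"] by (simp add: algebra_simps)
  moreover have "d (i + L + 1) = d (i + 1)" for i using dp[rule_format, of "i + 1"] by (simp add: algebra_simps)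
  moreover have e: "(ca_step r ^^ Suc t) c = (\<lambda>i. r (d (i - 1)) (d i) (d (i + 1)))"
    by (simp add: d_def ca_step_def)
  ultimately show ?case using dS dp clo unfolding e by simp
qed

lemma nc_intro:
  assumes clo: "\<forall>a\<in>S. \<forall>b\<in>S. \<forall>c\<in>S. r a b c \<in> S"
    and one: "\<And>L c. L > 0 \<Longrightarrow> (\<forall>i. c i \<in> S) \<Longrightarrow> (\<forall>i. c (i + L) = c i) \<Longrightarrow>
       (\<Sum>i\<in>{1..L}. ca_step r c i $ k) = (\<Sum>i\<in>{1..L}. c i $ k)"
  shows "number_conserving r S k"
  unfolding number_conserving_def
proof (intro allI impI)
  fix L :: int and c t
  assume L: "L > 0" and c: "(\<forall>i. c i \<in> S) \<and> (\<forall>i. c (i + L) = c i)"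
  define d where "d = (ca_step r ^^ t) c"
  have "(\<forall>i. d i \<in> S) \<and> (\<forall>i. d (i + L) = d i)"
    using iter_props[OF clo] c d_def by blast
  then have "(\<Sum>i\<in>{1..L}. ca_step r d i $ k) = (\<Sum>i\<in>{1..L}. d i $ k)"
    using one L by blast
  then show "nu r c L (Suc t) k = nu r c L t k"
    by (simp add: nu_def d_def)
qed

lemma nc_mono: "number_conserving r S k \<Longrightarrow> T \<subseteq> S \<Longrightarrow> number_conserving r T k"
  unfolding number_conserving_def by blast

lemma telescope: "(L::int) \<ge> 0 \<Longrightarrow> (\<Sum>i\<in>{1..L}. (g (i - 1) - g i :: real)) = g 0 - g L"
proof (induction L rule: int_ge_induct)
  case base
  then show ?case by simp
next
  case (step i)
  have "{1..i+1} = insert (i + 1) {1..i}" using step by auto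
  then show ?case using step by simp
qed

lemma E3_cases: "x \<in> E3 \<Longrightarrow> \<exists>j. x = e3 j" by (auto simp: E3_def)

definition cfg :: "(real^3) list \<Rightarrow> int \<Rightarrow> int \<Rightarrow> real^3" where
  "cfg ws L = (\<lambda>i. ws ! nat (i mod L))"

lemma five_test:
  assumes nc: "number_conserving h E3 kk"
  shows "h (e3 c) (e3 1) (e3 1) $ kk + h (e3 1) (e3 1) (e3 a) $ kk + h (e3 1) (e3 a) (e3 b) $ kk
     + h (e3 a) (e3 b) (e3 c) $ kk + h (e3 b) (e3 c) (e3 1) $ kk
     = e3 1 $ kk + e3 1 $ kk + e3 a $ kk + e3 b $ kk + e3 c $ kk"
proof -
  let ?c = "cfg [e3 1, e3 1, e3 a, e3 b, e3 c] 5"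
  have "\<forall>i. ?c i \<in> E3"
  proof
    fix i
    have "nat (i mod 5) < 5" by simp
    then show "?c i \<in> E3" unfolding cfg_def E3_def
      by (auto simp: less_Suc_eq nth_Cons')
  qed
  moreover have "\<forall>i. ?c (i + 5) = ?c i" by (simp add: cfg_def)
  ultimately have "nu h ?c 5 (Suc 0) kk = nu h ?c 5 0 kk"
    using nc unfolding number_conserving_def by (meson zero_less_numeral)
  moreover have "{1..5::int} = {1,2,3,4,5}" by auto
  ultimately show ?thesis by (simp add: nu_def ca_step_def cfg_def algebra_simps)
qed

lemma four_test:
  assumes nc: "number_conserving h E3 kk"
  shows "h (e3 c) (e3 1) (e3 1) $ kk + h (e3 1) (e3 1) (e3 b) $ kk + h (e3 1) (e3 b) (e3 c) $ kk
     + h (e3 b) (e3 c) (e3 1) $ kk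
     = e3 1 $ kk + e3 1 $ kk + e3 b $ kk + e3 c $ kk"
proof -
  let ?c = "cfg [e3 1, e3 1, e3 b, e3 c] 4"
  have "\<forall>i. ?c i \<in> E3"
  proof
    fix i
    have "nat (i mod 4) < 4" by simp
    then show "?c i \<in> E3" unfolding cfg_def E3_def
      by (auto simp: less_Suc_eq nth_Cons')
  qed
  moreover have "\<forall>i. ?c (i + 4) = ?c i" by (simp add: cfg_def)
  ultimately have "nu h ?c 4 (Suc 0) kk = nu h ?c 4 0 kk"
    using nc unfolding number_conserving_def by (meson zero_less_numeral)
  moreover have "{1..4::int} = {1,2,3,4}" by auto
  ultimately show ?thesis by (simp add: nu_def ca_step_def cfg_def algebra_simps)
qed

definition Psi :: "(real^3 \<Rightarrow> real^3 \<Rightarrow> real^3 \<Rightarrow> real^3) \<Rightarrow> 3 \<Rightarrow> 3 \<Rightarrow> 3 \<Rightarrow> real" where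
  "Psi h kk a b = e3 a $ kk - h (e3 1) (e3 1) (e3 a) $ kk - h (e3 1) (e3 a) (e3 b) $ kk"

lemma H_ident:
  assumes nc: "number_conserving h E3 kk"
  shows "h (e3 a) (e3 b) (e3 c) $ kk = e3 b $ kk + Psi h kk a b - Psi h kk b c"
  using five_test[OF nc, of c a b] four_test[OF nc, of c b] unfolding Psi_def by linarith

definition PsiH :: "(real^3 \<Rightarrow> real^3 \<Rightarrow> real^3 \<Rightarrow> real^3) \<Rightarrow> 3 \<Rightarrow> real^3 \<Rightarrow> real^3 \<Rightarrow> real" where
  "PsiH h kk x y = (\<Sum>j\<in>UNIV. \<Sum>k\<in>UNIV. x $ j * y $ k * Psi h kk j k)"

lemma delta_ident:
  assumes nc: "number_conserving h E3 kk"
    and x: "(\<Sum>i\<in>UNIV. x $ i) = 1" and z: "(\<Sum>i\<in>UNIV. z $ i) = 1"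
  shows "fuzzify h x y z $ kk = y $ kk + PsiH h kk x y - PsiH h kk y z"
proof -
  have "fuzzify h x y z $ kk = (\<Sum>j\<in>UNIV. \<Sum>k\<in>UNIV. \<Sum>l\<in>UNIV. x $ j * y $ k * z $ l * e3 k $ kk)
     + (\<Sum>j\<in>UNIV. \<Sum>k\<in>UNIV. \<Sum>l\<in>UNIV. x $ j * y $ k * z $ l * Psi h kk j k)
     - (\<Sum>j\<in>UNIV. \<Sum>k\<in>UNIV. \<Sum>l\<in>UNIV. x $ j * y $ k * z $ l * Psi h kk k l)"
    unfolding fuzzify_nth H_ident[OF nc] by (simp add: algebra_simps sum.distrib sum_subtractf)
  also have "(\<Sum>j\<in>UNIV. \<Sum>k\<in>UNIV. \<Sum>l\<in>UNIV. x $ j * y $ k * z $ l * e3 k $ kk)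
     = (\<Sum>j\<in>UNIV. x $ j) * (\<Sum>k\<in>UNIV. y $ k * e3 k $ kk) * (\<Sum>l\<in>UNIV. z $ l)"
    by (simp add: sum_distrib_left sum_distrib_right mult_ac) (rule sum.swap)
  also have "(\<Sum>k\<in>UNIV. y $ k * e3 k $ kk) = y $ kk"
    by (subst sum.cong[OF refl, of _ _ "\<lambda>k. if k = kk then y $ k else 0"]) (auto simp: e3_nth)
  also have "(\<Sum>j\<in>UNIV. \<Sum>k\<in>UNIV. \<Sum>l\<in>UNIV. x $ j * y $ k * z $ l * Psi h kk j k)
     = PsiH h kk x y * (\<Sum>l\<in>UNIV. z $ l)"
    by (simp add: PsiH_def sum_distrib_left sum_distrib_right mult_ac)
  also have "(\<Sum>j\<in>UNIV. \<Sum>k\<in>UNIV. \<Sum>l\<in>UNIV. x $ j * y $ k * z $ l * Psi h kk k l)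
     = (\<Sum>j\<in>UNIV. x $ j * PsiH h kk y z)"
    by (simp add: PsiH_def sum_distrib_left mult.assoc)
  also have "(\<Sum>j\<in>UNIV. x $ j * PsiH h kk y z) = (\<Sum>j\<in>UNIV. x $ j) * PsiH h kk y z"
    by (simp add: sum_distrib_right)
  finally show ?thesis using x z by simp
qed

lemma E3_sub_Delta: "E3 \<subseteq> Delta"
  by (auto simp: E3_def Delta_def e3_nth sum_e3)

lemma iter_eq:
  assumes h: "is_VCA_rule h" and c: "\<forall>i. c i \<in> E3"
  shows "(ca_step (fuzzify h) ^^ t) c = (ca_step h ^^ t) c \<and> (\<forall>i. (ca_step h ^^ t) c i \<in> E3)"
proof (induction t)
  case 0
  then show ?case using c by simp
next
  case (Suc t)
  define d where "d = (ca_step h ^^ t) c"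
  have dE: "\<forall>i. d i \<in> E3" and eq: "(ca_step (fuzzify h) ^^ t) c = d" using Suc d_def by auto
  have fe: "fuzzify h a b b' = h a b b'" if "a \<in> E3" "b \<in> E3" "b' \<in> E3" for a b b'
    using that fuzzify_E3 by (auto simp: E3_def)
  have e1: "(ca_step (fuzzify h) ^^ Suc t) c = (\<lambda>i. fuzzify h (d (i - 1)) (d i) (d (i + 1)))"
    using eq by (simp add: ca_step_def)
  have e2: "(ca_step h ^^ Suc t) c = (\<lambda>i. h (d (i - 1)) (d i) (d (i + 1)))"
    by (simp add: d_def ca_step_def)
  show ?case unfolding e1 e2 using dE fe h by (simp add: is_VCA_rule_def)
qed

theorem mainTheorem2:
  fixes h :: "real^3 \<Rightarrow> real^3 \<Rightarrow> real^3 \<Rightarrow> real^3" and k :: 3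
  assumes "is_VCA_rule h"
  shows "number_conserving (fuzzify h) Delta k \<longleftrightarrow> number_conserving h E3 k"
proof
  assume nc: "number_conserving (fuzzify h) Delta k"
  show "number_conserving h E3 k"
    unfolding number_conserving_def
  proof (intro allI impI)
    fix L :: int and c t
    assume L: "L > 0" and c: "(\<forall>i. c i \<in> E3) \<and> (\<forall>i. c (i + L) = c i)"
    then have "(\<forall>i. c i \<in> Delta) \<and> (\<forall>i. c (i + L) = c i)" using E3_sub_Delta by blast
    then have "nu (fuzzify h) c L (Suc t) k = nu (fuzzify h) c L t k"
      using nc L unfolding number_conserving_def by blast
    then show "nu h c L (Suc t) k = nu h c L t k"
      unfolding nu_def using iter_eq[OF assms] c by metis
  qed
next
  assume nc: "number_conserving h E3 k"
  let ?S = "{x::real^3. (\<Sum>i\<in>UNIV. x $ i) = 1}"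
  have "number_conserving (fuzzify h) ?S k"
  proof (rule nc_intro)
    show "\<forall>a\<in>?S. \<forall>b\<in>?S. \<forall>c\<in>?S. fuzzify h a b c \<in> ?S"
      using fuzzify_sum1[OF assms] by blast
  next
    fix L :: int and c
    assume L: "L > 0" and cS: "\<forall>i. c i \<in> ?S" and cp: "\<forall>i. c (i + L) = c i"
    define P where "P i = PsiH h k (c i) (c (i + 1))" for i
    have "(\<Sum>i\<in>{1..L}. ca_step (fuzzify h) c i $ k)
       = (\<Sum>i\<in>{1..L}. c i $ k + (P (i - 1) - P i))"
      by (rule sum.cong) (use cS in \<open>simp_all add: ca_step_def P_def delta_ident[OF nc]\<close>)
    also have "\<dots> = (\<Sum>i\<in>{1..L}. c i $ k) + (P 0 - P L)"
      using L by (simp add: sum.distrib telescope)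
    also have "P L = P 0" using cp[rule_format, of 0] cp[rule_format, of 1]
      by (simp add: P_def add.commute)
    finally show "(\<Sum>i\<in>{1..L}. ca_step (fuzzify h) c i $ k) = (\<Sum>i\<in>{1..L}. c i $ k)" by simp
  qed
  then show "number_conserving (fuzzify h) Delta k"
    by (rule nc_mono) (auto simp: Delta_def)
qed

end
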